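(* Let $\mathbb{H}$ be a real Hilbert space, $\epsilon\in[0,1)$, $T\in\mathbb{K}(\mathbb{H})$ and $A\in\mathbb{B}(\mathbb{H})$ with $M_T\subseteq M_A$. Then $T\perp_B^{\epsilon}A$ if and only if there exists $x\in M_T$ such that $Tx\perp^{\epsilon}Ax$.
   Context: $\mathbb{K}(\mathbb{H})$ and $\mathbb{B}(\mathbb{H})$ denote the compact and the bounded linear operators on $\mathbb{H}$, with the operator norm. $M_T=\{x\in\mathbb{H}:\|x\|=1,\ \|Tx\|=\|T\|\}$. For $\epsilon\in[0,1)$ and $u,v$ in a normed space, $u\perp_B^{\epsilon}v$ means $\|u+\lambda v\|^2\ge\|u\|^2-2\epsilon\|u\|\|\lambda v\|$ for all $\lambda\in\mathbb{R}$. In an inner product space, $x\perp^{\epsilon}y$ means $|\langle x,y\rangle|\le\epsilon\|x\|\|y\|$. *)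

theory Defs
  imports "HOL-Analysis.Analysis"
begin

definition compact_op :: "('a::real_normed_vector \<Rightarrow>\<^sub>L 'b::real_normed_vector) \<Rightarrow> bool" where
  "compact_op T \<longleftrightarrow> compact (closure (blinfun_apply T ` ball 0 1))"

definition norm_attain :: "('a::real_normed_vector \<Rightarrow>\<^sub>L 'b::real_normed_vector) \<Rightarrow> 'a set" where
  "norm_attain T = {x. norm x = 1 \<and> norm (blinfun_apply T x) = norm T}"

definition bj_eps_orth :: "real \<Rightarrow> 'v::real_normed_vector \<Rightarrow> 'v \<Rightarrow> bool" where
  "bj_eps_orth eps u v \<longleftrightarrow>
     (\<forall>t::real. (norm (u + t *\<^sub>R v))^2 \<ge> (norm u)^2 - 2 * eps * norm u * norm (t *\<^sub>R v))"

definition inner_eps_orth :: "real \<Rightarrow> 'v::real_inner \<Rightarrow> 'v \<Rightarrow> bool" where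
  "inner_eps_orth eps x y \<longleftrightarrow> \<bar>inner x y\<bar> \<le> eps * norm x * norm y"

end

theory Submission
  imports Defs "HOL-Analysis.Analysis"
begin

lemma sq_add: "(norm (u + v::'a::real_inner))^2 = (norm u)^2 + 2 * inner u v + (norm v)^2"
  by (simp add: power2_norm_eq_inner inner_add_left inner_add_right inner_commute)

lemma sq_diff: "(norm (u - v::'a::real_inner))^2 = (norm u)^2 - 2 * inner u v + (norm v)^2"
  by (simp add: power2_norm_eq_inner inner_diff_left inner_diff_right inner_commute)

lemma blin_sq: "(norm (blinfun_apply T x))^2 \<le> (norm T)^2 * (norm x)^2"
proof -
  have "norm (blinfun_apply T x) \<le> norm T * norm x" by (rule norm_blinfun)
  hence "(norm (blinfun_apply T x))^2 \<le> (norm T * norm x)^2"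
    by (simp add: power_mono)
  thus ?thesis by (simp add: power_mult_distrib)
qed

lemma E_add:
  fixes T :: "'a::real_inner \<Rightarrow>\<^sub>L 'b::real_inner"
  assumes "norm (T x) = norm T * norm x" "norm (T y) = norm T * norm y"
  shows "norm (T (x + y)) = norm T * norm (x + y)"
proof -
  have a: "(norm (T (x+y)))^2 + (norm (T (x-y)))^2 = 2*(norm (T x))^2 + 2*(norm (T y))^2"
    by (simp add: blinfun.add_right blinfun.diff_right sq_add sq_diff)
  have b: "(norm (x+y))^2 + (norm (x-y))^2 = 2*(norm x)^2 + 2*(norm y)^2"
    by (simp add: sq_add sq_diff)
  have c1: "(norm (T (x+y)))^2 \<le> (norm T)^2 * (norm (x+y))^2" by (rule blin_sq)
  have c2: "(norm (T (x-y)))^2 \<le> (norm T)^2 * (norm (x-y))^2" by (rule blin_sq)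
  have d: "2*(norm (T x))^2 + 2*(norm (T y))^2 = (norm T)^2 * (2*(norm x)^2 + 2*(norm y)^2)"
    using assms by (simp add: power_mult_distrib algebra_simps)
  have "(norm (T (x+y)))^2 = (norm T)^2 * (norm (x+y))^2"
    using a b c1 c2 d by (smt (verit) mult_left_mono zero_le_power2 distrib_left)
  hence "(norm (T (x+y)))^2 = (norm T * norm (x+y))^2" by (simp add: power_mult_distrib)
  thus ?thesis by (simp add: power2_eq_iff_nonneg)
qed

lemma E_scale:
  fixes T :: "'a::real_normed_vector \<Rightarrow>\<^sub>L 'b::real_normed_vector"
  assumes "norm (T x) = norm T * norm x"
  shows "norm (T (c *\<^sub>R x)) = norm T * norm (c *\<^sub>R x)"
  using assms by (simp add: blinfun.scaleR_right)

lemma approx_unit: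
  fixes B :: "'a::real_normed_vector \<Rightarrow>\<^sub>L 'b::real_normed_vector"
  assumes nt: "\<exists>x::'a. x \<noteq> 0" and e: "e > 0"
  shows "\<exists>x. norm x = 1 \<and> norm (B x) \<ge> norm B - e"
proof (rule ccontr)
  assume H: "\<not> ?thesis"
  obtain x0 :: 'a where "x0 \<noteq> 0" using nt by blast
  define u where "u = (1 / norm x0) *\<^sub>R x0"
  have u: "norm u = 1" using \<open>x0 \<noteq> 0\<close> by (simp add: u_def)
  hence "norm (B u) < norm B - e" using H by force
  hence pos: "norm B - e \<ge> 0" by (smt (verit) norm_ge_zero)
  have "norm B \<le> norm B - e"
  proof (rule norm_blinfun_bound[OF pos])
    fix x :: 'a
    show "norm (B x) \<le> (norm B - e) * norm x"
    proof (cases "x = 0")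
      case True thus ?thesis by simp
    next
      case False
      define w where "w = (1 / norm x) *\<^sub>R x"
      have "norm w = 1" using False by (simp add: w_def)
      hence "norm (B w) < norm B - e" using H by force
      moreover have "B w = (1 / norm x) *\<^sub>R B x" by (simp add: w_def blinfun.scaleR_right)
      ultimately have "norm (B x) / norm x < norm B - e" by simp
      thus ?thesis using False by (simp add: divide_less_eq less_imp_le mult.commute)
    qed
  qed
  thus False using e by simp
qed

lemma approx_sq:
  fixes B :: "'a::real_normed_vector \<Rightarrow>\<^sub>L 'b::real_normed_vector"
  assumes nt: "\<exists>x::'a. x \<noteq> 0" and e: "e > 0"
  shows "\<exists>x. norm x = 1 \<and> (norm (B x))^2 \<ge> (norm B)^2 - 2 * e * norm B"
proof -
  obtain x where x: "norm x = 1" "norm (B x) \<ge> norm B - e" using approx_unit[OF nt e] by blast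
  have "(norm (B x))^2 \<ge> (norm B)^2 - 2 * e * norm B"
  proof (cases "norm B - e \<ge> 0")
    case True
    hence "(norm B - e)^2 \<le> (norm (B x))^2" using x(2) by (simp add: power_mono)
    moreover have "(norm B - e)^2 \<ge> (norm B)^2 - 2 * e * norm B"
      by (simp add: power2_diff)
    ultimately show ?thesis by linarith
  next
    case False
    hence "(norm B)^2 - 2 * e * norm B \<le> 0"
      by (simp add: power2_eq_square) (smt (verit) e mult_right_mono norm_ge_zero)
    thus ?thesis by (smt (verit) zero_le_power2)
  qed
  thus ?thesis using x by blast
qed


lemma unit_diff_bound:
  fixes T :: "'a::real_inner \<Rightarrow>\<^sub>L 'b::real_inner"
  assumes u: "norm u = 1" and v: "norm v = 1" and tp: "norm T > 0"
    and ny: "norm y = norm T"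
  shows "(norm (u - v))^2 \<le> 4 * (norm (T u - y) + norm (T v - y)) / norm T"
proof -
  define a where "a = norm (T u - y)"
  define b where "b = norm (T v - y)"
  define \<delta> where "\<delta> = (a + b) / norm T"
  have pl: "(norm (u - v))^2 = 4 - (norm (u + v))^2"
    using u v by (simp add: sq_add sq_diff)
  have "norm (T u + T v) \<ge> 2 * norm T - a - b"
  proof -
    have "T u + T v = 2 *\<^sub>R y + ((T u - y) + (T v - y))" by (simp add: algebra_simps scaleR_2)
    hence "norm (T u + T v) \<ge> norm (2 *\<^sub>R y) - norm ((T u - y) + (T v - y))"
      by (metis norm_diff_ineq add_diff_cancel_left')
    moreover have "norm ((T u - y) + (T v - y)) \<le> a + b" unfolding a_def b_def by (rule norm_triangle_ineq)
    ultimately show ?thesis using ny by simp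
  qed
  moreover have "norm (T u + T v) \<le> norm T * norm (u + v)"
    by (metis blinfun.add_right norm_blinfun)
  moreover have "norm T * (2 - \<delta>) = 2 * norm T - a - b"
    using tp unfolding \<delta>_def by (simp add: field_simps)
  ultimately have s: "norm T * norm (u + v) \<ge> norm T * (2 - \<delta>)"
    by linarith
  hence s2: "norm (u + v) \<ge> 2 - \<delta>" using tp by simp
  have "(norm (u + v))^2 \<ge> 4 - 4 * \<delta>"
  proof (cases "2 - \<delta> \<ge> 0")
    case True
    hence "(2 - \<delta>)^2 \<le> (norm (u + v))^2" using s2 by (simp add: power_mono)
    moreover have "(2 - \<delta>)^2 \<ge> 4 - 4 * \<delta>" by (simp add: power2_diff)
    ultimately show ?thesis by linarith
  next
    case False thus ?thesis by (smt (verit) zero_le_power2)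
  qed
  hence "(norm (u - v))^2 \<le> 4 * \<delta>" using pl by linarith
  thus ?thesis unfolding \<delta>_def a_def b_def by simp
qed

lemma limit_attain:
  fixes T :: "'a::{real_inner,complete_space} \<Rightarrow>\<^sub>L 'a"
  assumes cT: "compact_op T" and tp: "norm T > 0"
    and unit: "\<And>n. norm (x n) = 1"
    and lim: "(\<lambda>n. norm (T (x n))) \<longlonglongrightarrow> norm T"
  shows "\<exists>r z. strict_mono r \<and> (x \<circ> r) \<longlonglongrightarrow> z \<and> z \<in> norm_attain T"
proof -
  define S where "S = closure (blinfun_apply T ` ball 0 1)"
  have "seq_compact S" using cT unfolding compact_op_def S_def by (rule compact_imp_seq_compact)
  moreover have "\<forall>n. T ((1/2) *\<^sub>R x n) \<in> S"
  proof
    fix n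
    have "(1/2) *\<^sub>R x n \<in> ball 0 1" using unit[of n] by simp
    thus "T ((1/2) *\<^sub>R x n) \<in> S" unfolding S_def by (meson closure_subset image_eqI subsetD)
  qed
  ultimately obtain l r where r: "strict_mono r" and l: "((\<lambda>n. T ((1/2) *\<^sub>R x n)) \<circ> r) \<longlonglongrightarrow> l"
    using seq_compactE by metis
  define y where "y = 2 *\<^sub>R l"
  have yl: "(\<lambda>n. T (x (r n))) \<longlonglongrightarrow> y"
  proof -
    have "(\<lambda>n. 2 *\<^sub>R T ((1/2) *\<^sub>R x (r n))) \<longlonglongrightarrow> 2 *\<^sub>R l"
      using l by (intro tendsto_scaleR tendsto_const) (simp add: comp_def)
    thus ?thesis by (simp add: y_def blinfun.scaleR_right)
  qed
  have "(\<lambda>n. norm (T (x (r n)))) \<longlonglongrightarrow> norm y" using yl by (rule tendsto_norm)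
  moreover have "(\<lambda>n. norm (T (x (r n)))) \<longlonglongrightarrow> norm T"
    using LIMSEQ_subseq_LIMSEQ[OF lim r] by (simp add: comp_def)
  ultimately have ny: "norm y = norm T" using LIMSEQ_unique by blast
  have C: "Cauchy (x \<circ> r)"
  proof (rule CauchyI)
    fix e :: real assume e: "e > 0"
    define d where "d = e^2 * norm T / 8"
    have d: "d > 0" using e tp by (simp add: d_def)
    obtain M where M: "\<And>n. n \<ge> M \<Longrightarrow> norm (T (x (r n)) - y) < d"
      using LIMSEQ_D[OF yl d] by blast
    show "\<exists>M. \<forall>m\<ge>M. \<forall>n\<ge>M. norm ((x \<circ> r) m - (x \<circ> r) n) < e"
    proof (intro exI allI impI)
      fix m n assume mn: "m \<ge> M" "n \<ge> M"
      have "(norm (x (r m) - x (r n)))^2 \<le> 4 * (norm (T (x (r m)) - y) + norm (T (x (r n)) - y)) / norm T"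
        by (rule unit_diff_bound[OF unit unit tp ny])
      also have "\<dots> < 4 * (d + d) / norm T"
        using M[OF mn(1)] M[OF mn(2)] tp by (simp add: divide_strict_right_mono)
      also have "\<dots> = e^2" using tp by (simp add: d_def)
      finally have "(norm (x (r m) - x (r n)))^2 < e^2" .
      hence "norm (x (r m) - x (r n)) < e" using e by (simp add: power_less_imp_less_base less_imp_le)
      thus "norm ((x \<circ> r) m - (x \<circ> r) n) < e" by simp
    qed
  qed
  then obtain z where z: "(x \<circ> r) \<longlonglongrightarrow> z" using Cauchy_convergent_iff convergent_def by blast
  have "(\<lambda>n. norm ((x \<circ> r) n)) \<longlonglongrightarrow> norm z" using z by (rule tendsto_norm)
  hence nz: "norm z = 1" using unit by (simp add: comp_def LIMSEQ_const_iff)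
  have "(\<lambda>n. T ((x \<circ> r) n)) \<longlonglongrightarrow> T z" using z by (rule blinfun.tendsto[OF tendsto_const])
  hence "T z = y" using yl LIMSEQ_unique by (simp add: comp_def) 
  hence "z \<in> norm_attain T" using nz ny by (simp add: norm_attain_def)
  thus ?thesis using r z by blast
qed


lemma pointwise:
  fixes T A :: "'a::real_inner \<Rightarrow>\<^sub>L 'a"
  assumes eps: "0 \<le> eps" and bj: "bj_eps_orth eps T A"
    and t: "0 < t" "t \<le> 1" and x: "norm x = 1"
    and B: "(norm ((T + t *\<^sub>R A) x))^2 \<ge> (norm (T + t *\<^sub>R A))^2 - 2 * t^2 * norm (T + t *\<^sub>R A)"
  defines "C \<equiv> 2 * norm T + 2 * norm A + (norm A)^2"
  shows "inner (T x) (A x) \<ge> - eps * norm A * norm T - t * C / 2"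
    and "(norm (T x))^2 \<ge> (norm T)^2 - t * (2 * norm T * norm A + 2 * eps * norm T * norm A + C)"
proof -
  define f where "f = inner (T x) (A x)"
  have e1: "(norm ((T + t *\<^sub>R A) x))^2 = (norm (T x))^2 + 2 * t * f + t^2 * (norm (A x))^2"
    unfolding f_def by (simp add: plus_blinfun.rep_eq scaleR_blinfun.rep_eq sq_add power_mult_distrib)
  have nB: "norm (T + t *\<^sub>R A) \<le> norm T + t * norm A"
    using norm_triangle_ineq[of T "t *\<^sub>R A"] t by simp
  have nB2: "t^2 * norm (T + t *\<^sub>R A) \<le> t^2 * (norm T + norm A)"
  proof -
    have "t * norm A \<le> norm A" using t by (simp add: mult_left_le_one_le)
    thus ?thesis using nB by (intro mult_left_mono) auto
  qed
  have bj1: "(norm (T + t *\<^sub>R A))^2 \<ge> (norm T)^2 - 2 * eps * norm T * (t * norm A)"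
    using bj t unfolding bj_eps_orth_def by (metis norm_scaleR abs_of_pos)
  have nTx: "norm (T x) \<le> norm T" using norm_blinfun[of T x] x by simp
  have nAx: "norm (A x) \<le> norm A" using norm_blinfun[of A x] x by simp
  have P: "(norm (T x))^2 \<le> (norm T)^2" using nTx by (simp add: power_mono)
  have Q: "t^2 * (norm (A x))^2 \<le> t^2 * (norm A)^2" using nAx by (intro mult_left_mono power_mono) auto
  have fb: "\<bar>f\<bar> \<le> norm T * norm A"
  proof -
    have "\<bar>f\<bar> \<le> norm (T x) * norm (A x)" unfolding f_def by (rule Cauchy_Schwarz_ineq2)
    also have "\<dots> \<le> norm T * norm A" using nTx nAx by (intro mult_mono) auto
    finally show ?thesis .
  qed
  have main: "(norm (T x))^2 + 2 * t * f + t^2 * (norm A)^2 \<ge> (norm T)^2 - 2 * eps * norm T * (t * norm A) - 2 * t^2 * (norm T + norm A)"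
    using B e1 nB2 bj1 Q by linarith
  have "t * (2 * f + 2 * eps * norm A * norm T + t * C) \<ge> 0"
    using main P unfolding C_def by (simp add: algebra_simps power2_eq_square)
  hence "2 * f + 2 * eps * norm A * norm T + t * C \<ge> 0" using t by (simp add: zero_le_mult_iff)
  thus "inner (T x) (A x) \<ge> - eps * norm A * norm T - t * C / 2" unfolding f_def[symmetric] by linarith
  have tf: "t * f \<le> t * (norm T * norm A)" using fb t by (intro mult_left_mono) auto
  have "t^2 * C \<le> t * C"
  proof -
    have "C \<ge> 0" unfolding C_def by simp
    moreover have "t^2 \<le> t" using t by (simp add: power2_eq_square mult_left_le_one_le)
    ultimately show ?thesis by (simp add: mult_right_mono)
  qed
  thus "(norm (T x))^2 \<ge> (norm T)^2 - t * (2 * norm T * norm A + 2 * eps * norm T * norm A + C)"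
    using main tf unfolding C_def by (simp add: algebra_simps power2_eq_square)
qed


lemma core:
  fixes T A :: "'a::{real_inner, complete_space} \<Rightarrow>\<^sub>L 'a"
  assumes nt: "\<exists>x::'a. x \<noteq> 0" and eps: "0 \<le> eps" and cT: "compact_op T"
    and tp: "norm T > 0" and bj: "bj_eps_orth eps T A"
  shows "\<exists>x\<in>norm_attain T. inner (T x) (A x) \<ge> - eps * norm A * norm T"
proof -
  define t where "t n = inverse (real (Suc n))" for n
  have t0: "0 < t n" "t n \<le> 1" for n by (auto simp: t_def field_simps)
  have "\<forall>n. \<exists>x. norm x = 1 \<and> (norm ((T + t n *\<^sub>R A) x))^2 \<ge> (norm (T + t n *\<^sub>R A))^2 - 2 * (t n)^2 * norm (T + t n *\<^sub>R A)"
  proof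
    fix n
    have "(t n)^2 > 0" using t0(1)[of n] by simp
    from approx_sq[OF nt this, of "T + t n *\<^sub>R A"]
    show "\<exists>x. norm x = 1 \<and> (norm ((T + t n *\<^sub>R A) x))^2 \<ge> (norm (T + t n *\<^sub>R A))^2 - 2 * (t n)^2 * norm (T + t n *\<^sub>R A)" .
  qed
  then obtain x where x: "\<And>n. norm (x n) = 1"
    and xB: "\<And>n. (norm ((T + t n *\<^sub>R A) (x n)))^2 \<ge> (norm (T + t n *\<^sub>R A))^2 - 2 * (t n)^2 * norm (T + t n *\<^sub>R A)"
    by metis
  define C where "C = 2 * norm T + 2 * norm A + (norm A)^2"
  define K where "K = 2 * norm T * norm A + 2 * eps * norm T * norm A + C"
  have f: "inner (T (x n)) (A (x n)) \<ge> - eps * norm A * norm T - t n * C / 2" for n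
    unfolding C_def by (rule pointwise(1)[OF eps bj t0(1) t0(2) x xB])
  have g: "(norm (T (x n)))^2 \<ge> (norm T)^2 - t n * K" for n
    unfolding K_def C_def by (rule pointwise(2)[OF eps bj t0(1) t0(2) x xB])
  have tl: "t \<longlonglongrightarrow> 0" unfolding t_def by (rule LIMSEQ_inverse_real_of_nat)
  have "(\<lambda>n. (norm (T (x n)))^2) \<longlonglongrightarrow> (norm T)^2"
  proof (rule tendsto_sandwich[of "\<lambda>n. (norm T)^2 - t n * K" _ _ "\<lambda>n. (norm T)^2"])
    show "\<forall>\<^sub>F n in sequentially. (norm T)\<^sup>2 - t n * K \<le> (norm (T (x n)))\<^sup>2" using g by simp
    show "\<forall>\<^sub>F n in sequentially. (norm (T (x n)))\<^sup>2 \<le> (norm T)\<^sup>2"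
    proof (rule always_eventually, rule allI)
      fix n
      have "norm (T (x n)) \<le> norm T" using norm_blinfun[of T "x n"] x[of n] by simp
      thus "(norm (T (x n)))\<^sup>2 \<le> (norm T)\<^sup>2" by (simp add: power_mono)
    qed
    have "(\<lambda>n. (norm T)^2 - t n * K) \<longlonglongrightarrow> (norm T)^2 - 0 * K"
      by (intro tendsto_intros tl)
    thus "(\<lambda>n. (norm T)^2 - t n * K) \<longlonglongrightarrow> (norm T)^2" by simp
  qed simp
  hence "(\<lambda>n. sqrt ((norm (T (x n)))^2)) \<longlonglongrightarrow> sqrt ((norm T)^2)" by (rule tendsto_real_sqrt)
  hence lim: "(\<lambda>n. norm (T (x n))) \<longlonglongrightarrow> norm T" by simp
  obtain r z where r: "strict_mono r" and z: "(x \<circ> r) \<longlonglongrightarrow> z" and zM: "z \<in> norm_attain T"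
    using limit_attain[OF cT tp x lim] by blast
  have z': "(\<lambda>n. x (r n)) \<longlonglongrightarrow> z" using z by (simp add: comp_def)
  have L1: "(\<lambda>n. inner (T (x (r n))) (A (x (r n)))) \<longlonglongrightarrow> inner (T z) (A z)"
    by (intro tendsto_inner blinfun.tendsto[OF tendsto_const] z')
  have tr: "(\<lambda>n. t (r n)) \<longlonglongrightarrow> 0" using LIMSEQ_subseq_LIMSEQ[OF tl r] by (simp add: comp_def)
  have L2: "(\<lambda>n. - eps * norm A * norm T - t (r n) * C / 2) \<longlonglongrightarrow> - eps * norm A * norm T - 0 * C / 2"
    by (intro tendsto_intros tr) simp
  have "- eps * norm A * norm T - 0 * C / 2 \<le> inner (T z) (A z)"
    by (rule LIMSEQ_le[OF L2 L1]) (use f in blast)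
  thus ?thesis using zM by auto
qed


lemma combine:
  fixes T A :: "'a::real_inner \<Rightarrow>\<^sub>L 'a"
  assumes x1: "x1 \<in> norm_attain T" and x2: "x2 \<in> norm_attain T" and c: "c \<ge> 0"
    and f1: "inner (T x1) (A x1) \<ge> - c" and f2: "inner (T x2) (A x2) \<le> c"
  shows "\<exists>x\<in>norm_attain T. \<bar>inner (T x) (A x)\<bar> \<le> c"
proof (cases "\<bar>inner (T x1) (A x1)\<bar> \<le> c \<or> \<bar>inner (T x2) (A x2)\<bar> \<le> c")
  case True thus ?thesis using x1 x2 by blast
next
  case False
  hence g1: "inner (T x1) (A x1) > c" and g2: "inner (T x2) (A x2) < - c" using f1 f2 by auto
  define v where "v s = (1 - s) *\<^sub>R x1 + s *\<^sub>R x2" for s :: real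
  define h where "h s = - inner (T (v s)) (A (v s))" for s
  have cont: "continuous_on {0..1} h" unfolding h_def v_def
    by (intro continuous_intros)
  have "h 0 \<le> 0" "0 \<le> h 1" using g1 g2 c by (auto simp: h_def v_def)
  then obtain s where s: "0 \<le> s" "s \<le> 1" "h s = 0"
    using IVT'[of h 0 0 1, OF _ _ _ cont] by auto
  have vnz: "v s \<noteq> 0"
  proof
    assume v0: "v s = 0"
    hence "(1 - s) *\<^sub>R x1 = - (s *\<^sub>R x2)" unfolding v_def by (simp add: eq_neg_iff_add_eq_0)
    hence "norm ((1 - s) *\<^sub>R x1) = norm (s *\<^sub>R x2)" by (metis norm_minus_cancel)
    hence "1 - s = s" using x1 x2 s by (simp add: norm_attain_def)
    hence "s = 1/2" by simp
    hence "v s = v (1/2)" by (rule arg_cong)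
    moreover have "2 *\<^sub>R v (1/2) = x1 + x2" by (simp add: v_def scaleR_add_right)
    ultimately have "x1 + x2 = 2 *\<^sub>R v s" by simp
    hence "x2 = - x1" using v0 by (simp add: eq_neg_iff_add_eq_0 add.commute)
    hence "inner (T x2) (A x2) = inner (T x1) (A x1)" by (simp add: blinfun.minus_right)
    thus False using g1 g2 c by simp
  qed
  have E1: "norm (T x1) = norm T * norm x1" and E2: "norm (T x2) = norm T * norm x2"
    using x1 x2 by (auto simp: norm_attain_def)
  have Ev: "norm (T (v s)) = norm T * norm (v s)"
    unfolding v_def by (intro E_add E_scale E1 E2)
  define w where "w = (1 / norm (v s)) *\<^sub>R v s"
  have nw: "norm w = 1" using vnz by (simp add: w_def)
  have "norm (T w) = norm T * norm w" unfolding w_def by (intro E_scale Ev)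
  hence wM: "w \<in> norm_attain T" using nw by (simp add: norm_attain_def)
  have "inner (T w) (A w) = (1 / norm (v s))^2 * inner (T (v s)) (A (v s))"
    by (simp add: w_def blinfun.scaleR_right power2_eq_square)
  also have "\<dots> = 0" using s(3) by (simp add: h_def)
  finally show ?thesis using wM c by force
qed

lemma bj_neg:
  assumes "bj_eps_orth eps T A"
  shows "bj_eps_orth eps T (- A)"
  unfolding bj_eps_orth_def
proof
  fix t :: real
  have "(norm (T + (- t) *\<^sub>R A))^2 \<ge> (norm T)^2 - 2 * eps * norm T * norm ((- t) *\<^sub>R A)"
    using assms unfolding bj_eps_orth_def by blast
  thus "(norm (T + t *\<^sub>R - A))^2 \<ge> (norm T)^2 - 2 * eps * norm T * norm (t *\<^sub>R - A)"
    by simp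
qed

theorem mainTheorem5:
  fixes T A :: "'a::{real_inner, complete_space} \<Rightarrow>\<^sub>L 'a"
    and eps :: real
  assumes nontriv: "\<exists>x::'a. x \<noteq> 0"
    and eps: "0 \<le> eps" "eps < 1"
    and cT: "compact_op T"
    and sub: "norm_attain T \<subseteq> norm_attain A"
  shows "bj_eps_orth eps T A \<longleftrightarrow>
         (\<exists>x\<in>norm_attain T. inner_eps_orth eps (blinfun_apply T x) (blinfun_apply A x))"
proof
  assume bj: "bj_eps_orth eps T A"
  show "\<exists>x\<in>norm_attain T. inner_eps_orth eps (blinfun_apply T x) (blinfun_apply A x)"
  proof (cases "norm T = 0")
    case True
    obtain x0 :: 'a where "x0 \<noteq> 0" using nontriv by blast
    define u where "u = (1 / norm x0) *\<^sub>R x0"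
    have u: "norm u = 1" using \<open>x0 \<noteq> 0\<close> by (simp add: u_def)
    have "T = 0" using True by simp
    hence "u \<in> norm_attain T" using u by (simp add: norm_attain_def)
    moreover have "inner_eps_orth eps (T u) (A u)" using \<open>T = 0\<close> by (simp add: inner_eps_orth_def)
    ultimately show ?thesis by blast
  next
    case False
    hence tp: "norm T > 0" by simp
    obtain x1 where x1: "x1 \<in> norm_attain T" "inner (T x1) (A x1) \<ge> - eps * norm A * norm T"
      using core[OF nontriv eps(1) cT tp bj] by blast
    obtain x2 where x2: "x2 \<in> norm_attain T" "inner (T x2) ((- A) x2) \<ge> - eps * norm (- A) * norm T"
      using core[OF nontriv eps(1) cT tp bj_neg[OF bj]] by blast
    have x2': "inner (T x2) (A x2) \<le> eps * norm A * norm T"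
      using x2(2) by (simp add: uminus_blinfun.rep_eq)
    obtain x where x: "x \<in> norm_attain T" "\<bar>inner (T x) (A x)\<bar> \<le> eps * norm A * norm T"
    proof -
      have x1': "- (eps * norm A * norm T) \<le> inner (T x1) (A x1)" using x1(2) by simp
      have "0 \<le> eps * norm A * norm T" using eps(1) by simp
      from combine[OF x1(1) x2(1) this x1' x2'] show ?thesis using that by blast
    qed
    have "x \<in> norm_attain A" using x(1) sub by blast
    hence "norm (A x) = norm A" "norm (T x) = norm T" using x(1) by (auto simp: norm_attain_def)
    hence "inner_eps_orth eps (T x) (A x)" using x(2) by (simp add: inner_eps_orth_def mult_ac)
    thus ?thesis using x(1) by blast
  qed
next
  assume "\<exists>x\<in>norm_attain T. inner_eps_orth eps (blinfun_apply T x) (blinfun_apply A x)"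
  then obtain x where xT: "x \<in> norm_attain T" and o: "\<bar>inner (T x) (A x)\<bar> \<le> eps * norm (T x) * norm (A x)"
    unfolding inner_eps_orth_def by blast
  have xA: "x \<in> norm_attain A" using xT sub by blast
  have nx: "norm x = 1" "norm (T x) = norm T" "norm (A x) = norm A"
    using xT xA by (auto simp: norm_attain_def)
  show "bj_eps_orth eps T A" unfolding bj_eps_orth_def
  proof
    fix t :: real
    define f where "f = inner (T x) (A x)"
    have "norm ((T + t *\<^sub>R A) x) \<le> norm (T + t *\<^sub>R A)"
      using norm_blinfun[of "T + t *\<^sub>R A" x] nx by simp
    hence a: "(norm ((T + t *\<^sub>R A) x))^2 \<le> (norm (T + t *\<^sub>R A))^2" by (simp add: power_mono)
    have b: "(norm ((T + t *\<^sub>R A) x))^2 = (norm T)^2 + 2 * t * f + t^2 * (norm A)^2"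
      unfolding f_def using nx by (simp add: plus_blinfun.rep_eq scaleR_blinfun.rep_eq sq_add power_mult_distrib)
    have c: "\<bar>f\<bar> \<le> eps * norm T * norm A" using o nx by (simp add: f_def)
    have "- (t * f) \<le> \<bar>t\<bar> * \<bar>f\<bar>" by (simp add: abs_mult[symmetric])
    also have "\<dots> \<le> \<bar>t\<bar> * (eps * norm T * norm A)" using c by (intro mult_left_mono) auto
    finally have d: "- (t * f) \<le> \<bar>t\<bar> * (eps * norm T * norm A)" .
    have "t^2 * (norm A)^2 \<ge> 0" by simp
    hence "(norm (T + t *\<^sub>R A))^2 \<ge> (norm T)^2 - 2 * (\<bar>t\<bar> * (eps * norm T * norm A))"
      using a b d by linarith
    thus "(norm (T + t *\<^sub>R A))^2 \<ge> (norm T)^2 - 2 * eps * norm T * norm (t *\<^sub>R A)"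
      by (simp add: mult_ac)
  qed
qed

end
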